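(* Let $\{G(n)\}$ be a sequence of random intersection graphs satisfying condition (A) and $\mathrm{Var}(Y(n))=O(1)$. Then $\omega(G(n))=\omega'(G(n))+O_P(1)$. If, in addition, there is a positive sequence $\varepsilon_n\to0$ with $n\,\mathbb P(Y(n)>\varepsilon_n n^{1/2})\to0$, then there is an absolute constant $C$ such that $\mathbb P\big(\omega(G(n))\le \max\{C,\ \omega'(G(n))+3\}\big)\to1$.
   Context: Random intersection graph: given positive integers $n,m$ and a probability measure $P$ on $\{0,1,\dots,m\}$, $G(n,m,P)$ has vertex set $V=[n]$ and attribute set $W=\{w_1,\dots,w_m\}$; independent random subsets $S_1,\dots,S_n\subseteq W$ are drawn with $\mathbb P(S_v=S)=P(|S|)/\binom{m}{|S|}$ for every $S\subseteq W$, and distinct $u,v$ are adjacent iff $S_u\cap S_v\neq\emptyset$. For a sequence $G(n)=G(n,m(n),P(n))$ with $m(n)\to\infty$, $X(n)$ has law $P(n)$ and $Y(n)=(n/m)^{1/2}X(n)$. Condition (A): $\mathbb E\,Y(n)=O(1)$. $\omega(G)$ is the clique number. For $w\in W$, $T(w)=\{v\in V: w\in S_v\}$ (a clique, called monochromatic), and $\omega'(G(n))=\max_{w\in W}|T(w)|$. *)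

theory Defs
  imports "HOL-Probability.Probability"
begin

text \<open>Attribute set W = {..<m}; vertex set V = {..<n}.
  Law of a single random attribute set S_v: draw k from P, then a uniformly
  random k-subset of W, so that Pr(S_v = S) = P(|S|) / (m choose |S|).\<close>
definition attr_pmf :: "nat \<Rightarrow> nat pmf \<Rightarrow> nat set pmf" where
  "attr_pmf m P = bind_pmf P (\<lambda>k. pmf_of_set {S. S \<subseteq> {..<m} \<and> card S = k})"

text \<open>G(n,m,P), represented by the independent family of attribute sets (S_v) for v < n.\<close>
definition RIG :: "nat \<Rightarrow> nat \<Rightarrow> nat pmf \<Rightarrow> (nat \<Rightarrow> nat set) pmf" where
  "RIG n m P = Pi_pmf {..<n} {} (\<lambda>_. attr_pmf m P)"

definition is_clique :: "nat \<Rightarrow> (nat \<Rightarrow> nat set) \<Rightarrow> nat set \<Rightarrow> bool" where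
  "is_clique n S K \<longleftrightarrow> K \<subseteq> {..<n} \<and> (\<forall>u\<in>K. \<forall>v\<in>K. u \<noteq> v \<longrightarrow> S u \<inter> S v \<noteq> {})"

definition clique_number :: "nat \<Rightarrow> (nat \<Rightarrow> nat set) \<Rightarrow> nat" where
  "clique_number n S = Max (card ` {K. is_clique n S K})"

text \<open>Largest monochromatic clique: max over w in W of |T(w)| (0 if W is empty).\<close>
definition mono_clique_number :: "nat \<Rightarrow> nat \<Rightarrow> (nat \<Rightarrow> nat set) \<Rightarrow> nat" where
  "mono_clique_number n m S = Max (insert 0 ((\<lambda>w. card {v\<in>{..<n}. w \<in> S v}) ` {..<m}))"

text \<open>Y(n) = (n/m)^(1/2) X(n), as a function of the value k of X(n).\<close>
definition Yval :: "nat \<Rightarrow> nat \<Rightarrow> nat \<Rightarrow> real" where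
  "Yval n m k = sqrt (real n / real m) * real k"

definition RIG_seq :: "(nat \<Rightarrow> nat) \<Rightarrow> (nat \<Rightarrow> nat pmf) \<Rightarrow> bool" where
  "RIG_seq m P \<longleftrightarrow> (\<forall>n. set_pmf (P n) \<subseteq> {..m n}) \<and> filterlim m at_top sequentially"

definition condA :: "(nat \<Rightarrow> nat) \<Rightarrow> (nat \<Rightarrow> nat pmf) \<Rightarrow> bool" where
  "condA m P \<longleftrightarrow> (\<exists>B. \<forall>\<^sub>F n in sequentially.
      \<bar>measure_pmf.expectation (P n) (Yval n (m n))\<bar> \<le> B)"

definition var_bounded :: "(nat \<Rightarrow> nat) \<Rightarrow> (nat \<Rightarrow> nat pmf) \<Rightarrow> bool" where
  "var_bounded m P \<longleftrightarrow> (\<exists>B. \<forall>\<^sub>F n in sequentially.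
      \<bar>measure_pmf.variance (P n) (Yval n (m n))\<bar> \<le> B)"

end

theory Submission
  imports Defs
begin


lemma ratio_binom:
  fixes d k m :: nat
  assumes "d \<le> k" "k \<le> m"
  shows "real (k choose d) \<le> (real k / real m) ^ d * real (m choose d)"
proof -
  have "real (k choose d) = (\<Prod>i = 0..<d. real (k - i) / real (d - i))"
    using assms binomial_altdef_of_nat by blast
  also have "\<dots> \<le> (\<Prod>i = 0..<d. (real k / real m) * (real (m - i) / real (d - i)))"
  proof (rule prod_mono, safe)
    fix i assume i: "i \<in> {0..<d}"
    have "real (k - i) * real m \<le> real k * real (m - i)"
      using i assms by (simp add: of_nat_diff algebra_simps mult_left_mono)
    hence h: "real (k - i) \<le> (real k / real m) * real (m - i)"
      using i assms by (simp add: field_simps)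
    show "0 \<le> real (k - i) / real (d - i)" by simp
    have "real (k - i) / real (d - i) \<le> ((real k / real m) * real (m - i)) / real (d - i)"
      by (rule divide_right_mono[OF h]) simp
    thus "real (k - i) / real (d - i) \<le> real k / real m * (real (m - i) / real (d - i))"
      by simp
  qed
  also have "\<dots> = (\<Prod>i = 0..<d. real k / real m) * (\<Prod>i = 0..<d. real (m - i) / real (d - i))"
    by (rule prod.distrib)
  also have "(\<Prod>i = 0..<d. real k / real m) = (real k / real m) ^ d"
    by simp
  also have "(\<Prod>i = 0..<d. real (m - i) / real (d - i)) = real (m choose d)"
    using assms binomial_altdef_of_nat[of d m, where 'a=real] by (simp add: of_nat_diff)
  finally show ?thesis .
qed

lemma card_subsets_containing:
  assumes "finite M" "A \<subseteq> M" "card A \<le> k"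
  shows "card {S. S \<subseteq> M \<and> card S = k \<and> A \<subseteq> S} = (card M - card A) choose (k - card A)"
proof -
  have fA: "finite A" using assms finite_subset by blast
  have "bij_betw (\<lambda>S. S - A) {S. S \<subseteq> M \<and> card S = k \<and> A \<subseteq> S}
          {S'. S' \<subseteq> M - A \<and> card S' = k - card A}"
  proof (rule bij_betwI[where g = "\<lambda>S'. S' \<union> A"])
    show "(\<lambda>S. S - A) \<in> {S. S \<subseteq> M \<and> card S = k \<and> A \<subseteq> S} \<rightarrow> {S'. S' \<subseteq> M - A \<and> card S' = k - card A}"
    proof
      fix S assume S: "S \<in> {S. S \<subseteq> M \<and> card S = k \<and> A \<subseteq> S}"
      hence "finite S" using assms finite_subset by blast
      with S show "S - A \<in> {S'. S' \<subseteq> M - A \<and> card S' = k - card A}"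
        using fA by (auto simp: card_Diff_subset)
    qed
    show "(\<lambda>S'. S' \<union> A) \<in> {S'. S' \<subseteq> M - A \<and> card S' = k - card A} \<rightarrow> {S. S \<subseteq> M \<and> card S = k \<and> A \<subseteq> S}"
    proof
      fix S assume S: "S \<in> {S'. S' \<subseteq> M - A \<and> card S' = k - card A}"
      hence "finite S" using assms finite_subset by blast
      moreover have "S \<inter> A = {}" using S by auto
      ultimately show "S \<union> A \<in> {S. S \<subseteq> M \<and> card S = k \<and> A \<subseteq> S}"
        using S assms fA by (auto simp: card_Un_disjoint)
    qed
  qed auto
  hence "card {S. S \<subseteq> M \<and> card S = k \<and> A \<subseteq> S} = card {S'. S' \<subseteq> M - A \<and> card S' = k - card A}"
    by (rule bij_betw_same_card)
  also have "\<dots> = card (M - A) choose (k - card A)"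
    using assms by (intro n_subsets) auto
  finally show ?thesis using assms fA by (simp add: card_Diff_subset)
qed

lemma unif_contain_le:
  fixes A :: "nat set"
  assumes "A \<subseteq> {..<m}" "k \<le> m"
  shows "real (card {S. S \<subseteq> {..<m} \<and> card S = k \<and> A \<subseteq> S})
          \<le> (real k / real m) ^ card A * real (m choose k)"
proof (cases "card A \<le> k")
  case False
  have E: "{S. S \<subseteq> {..<m} \<and> card S = k \<and> A \<subseteq> S} = {}"
  proof -
    { fix S assume "S \<subseteq> {..<m}" "card S = k" "A \<subseteq> S"
      hence "card A \<le> k" using card_mono[of S A] finite_subset[of S "{..<m}"] by auto
      with False have False by simp }
    thus ?thesis by blast
  qed
  have z: "0 \<le> (real k / real m) ^ card A * real (m choose k)"
    by (intro mult_nonneg_nonneg zero_le_power divide_nonneg_nonneg) simp_all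
  have c0: "card {S. S \<subseteq> {..<m} \<and> card S = k \<and> A \<subseteq> S} = 0" by (subst E) (rule card.empty)
  show ?thesis by (simp only: c0 of_nat_0) (rule z)
next
  case True
  let ?d = "card A"
  have cA: "?d \<le> m" using True assms by simp
  have "card {S. S \<subseteq> {..<m} \<and> card S = k \<and> A \<subseteq> S} = (m - ?d) choose (k - ?d)"
    using card_subsets_containing[of "{..<m}" A k] assms True by simp
  moreover have "(m choose k) * (k choose ?d) = (m choose ?d) * ((m - ?d) choose (k - ?d))"
    using choose_mult[of ?d k m] True assms by simp
  ultimately have eq: "real (m choose ?d) * real (card {S. S \<subseteq> {..<m} \<and> card S = k \<and> A \<subseteq> S})
      = real (m choose k) * real (k choose ?d)"
    by (metis of_nat_mult)
  have pos: "real (m choose ?d) > 0" using cA by simp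
  have "real (m choose ?d) * real (card {S. S \<subseteq> {..<m} \<and> card S = k \<and> A \<subseteq> S})
      = real (m choose k) * real (k choose ?d)" by (rule eq)
  also have "\<dots> \<le> real (m choose k) * ((real k / real m) ^ ?d * real (m choose ?d))"
    by (rule mult_left_mono[OF ratio_binom[OF True assms(2)]]) simp
  also have "\<dots> = real (m choose ?d) * ((real k / real m) ^ ?d * real (m choose k))"
    by (simp only: mult_ac)
  finally have "real (m choose ?d) * real (card {S. S \<subseteq> {..<m} \<and> card S = k \<and> A \<subseteq> S})
      \<le> real (m choose ?d) * ((real k / real m) ^ ?d * real (m choose k))" .
  thus ?thesis using pos by (rule mult_left_le_imp_le)
qed




lemma prob_as_exp: "measure_pmf.prob p X = measure_pmf.expectation p (indicator X)"
  by (simp add: measure_pmf.emeasure_eq_measure)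

definition Uk :: "nat \<Rightarrow> nat \<Rightarrow> nat set set" where
  "Uk m k = {S. S \<subseteq> {..<m} \<and> card S = k}"

lemma Uk_finite: "finite (Uk m k)"
  unfolding Uk_def by (rule finite_subset[of _ "Pow {..<m}"]) auto

lemma Uk_ne: "k \<le> m \<Longrightarrow> Uk m k \<noteq> {}"
  unfolding Uk_def by (auto intro!: exI[of _ "{..<k}"])

lemma attr_pmf_Uk: "attr_pmf m P = bind_pmf P (\<lambda>k. pmf_of_set (Uk m k))"
  unfolding attr_pmf_def Uk_def by simp

lemma set_attr:
  assumes "set_pmf P \<subseteq> {..m}" "S \<in> set_pmf (attr_pmf m P)"
  shows "S \<subseteq> {..<m}" "card S \<in> set_pmf P"
proof -
  obtain k where k: "k \<in> set_pmf P" "S \<in> set_pmf (pmf_of_set (Uk m k))"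
    using assms(2) unfolding attr_pmf_Uk by auto
  have "k \<le> m" using k assms by auto
  hence "S \<in> Uk m k" using k Uk_finite Uk_ne by auto
  thus "S \<subseteq> {..<m}" "card S \<in> set_pmf P" using k unfolding Uk_def by auto
qed

lemma finite_attr:
  assumes "set_pmf P \<subseteq> {..m}"
  shows "finite (set_pmf (attr_pmf m P))"
proof -
  have "set_pmf (attr_pmf m P) \<subseteq> Pow {..<m}"
    using set_attr[OF assms] by blast
  thus ?thesis by (rule finite_subset) simp
qed

lemma exp_fin:
  fixes g :: "nat \<Rightarrow> real"
  assumes "set_pmf P \<subseteq> {..m}"
  shows "measure_pmf.expectation P g = (\<Sum>k\<le>m. pmf P k * g k)"
  by (subst integral_measure_pmf[of "{..m}"]) (use assms in auto)

lemma prob_attr_bind: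
  assumes "set_pmf P \<subseteq> {..m}"
  shows "measure_pmf.prob (attr_pmf m P) X
          = (\<Sum>k\<le>m. pmf P k * (real (card (Uk m k \<inter> X)) / real (card (Uk m k))))"
proof -
  have "measure_pmf.prob (attr_pmf m P) X
     = measure_pmf.expectation (bind_pmf P (\<lambda>k. pmf_of_set (Uk m k))) (indicator X)"
    unfolding attr_pmf_Uk prob_as_exp ..
  also have "\<dots> = (\<Sum>k\<le>m. pmf P k *\<^sub>R measure_pmf.expectation (pmf_of_set (Uk m k)) (indicator X))"
    by (rule pmf_expectation_bind) (use assms Uk_finite Uk_ne in auto)
  also have "\<dots> = (\<Sum>k\<le>m. pmf P k * (real (card (Uk m k \<inter> X)) / real (card (Uk m k))))"
  proof (rule sum.cong[OF refl])
    fix k assume "k \<in> {..m}"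
    hence "k \<le> m" by simp
    thus "pmf P k *\<^sub>R measure_pmf.expectation (pmf_of_set (Uk m k)) (indicator X)
         = pmf P k * (real (card (Uk m k \<inter> X)) / real (card (Uk m k)))"
      using Uk_finite Uk_ne measure_pmf_of_set[of "Uk m k" X]
      by (simp flip: prob_as_exp)
  qed
  finally show ?thesis .
qed


definition hT :: "nat \<Rightarrow> nat pmf \<Rightarrow> real \<Rightarrow> nat \<Rightarrow> real" where
  "hT m P T d = measure_pmf.expectation P (\<lambda>k. if real k \<le> T then (real k / real m) ^ d else 0)"

lemma prob_attr_le:
  assumes P: "set_pmf P \<subseteq> {..m}" and A: "A \<subseteq> {..<m}"
  shows "measure_pmf.prob (attr_pmf m P) {S. A \<subseteq> S \<and> real (card S) \<le> T} \<le> hT m P T (card A)"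
proof -
  let ?X = "{S. A \<subseteq> S \<and> real (card S) \<le> T}"
  have "measure_pmf.prob (attr_pmf m P) ?X
      = (\<Sum>k\<le>m. pmf P k * (real (card (Uk m k \<inter> ?X)) / real (card (Uk m k))))"
    by (rule prob_attr_bind[OF P])
  also have "\<dots> \<le> (\<Sum>k\<le>m. pmf P k * (if real k \<le> T then (real k / real m) ^ card A else 0))"
  proof (rule sum_mono, rule mult_left_mono)
    fix k assume "k \<in> {..m}"
    hence km: "k \<le> m" by simp
    have cU: "card (Uk m k) = m choose k" unfolding Uk_def using n_subsets[of "{..<m}" k] by simp
    have pos: "real (m choose k) > 0" using km by simp
    show "real (card (Uk m k \<inter> ?X)) / real (card (Uk m k))
          \<le> (if real k \<le> T then (real k / real m) ^ card A else 0)"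
    proof (cases "real k \<le> T")
      case True
      have "Uk m k \<inter> ?X = {S. S \<subseteq> {..<m} \<and> card S = k \<and> A \<subseteq> S}"
        using True unfolding Uk_def by auto
      hence "real (card (Uk m k \<inter> ?X)) \<le> (real k / real m) ^ card A * real (m choose k)"
        using unif_contain_le[OF A km] by simp
      thus ?thesis using True pos cU by (simp add: divide_le_eq)
    next
      case False
      have "Uk m k \<inter> ?X = {}" using False unfolding Uk_def by auto
      thus ?thesis using False by simp
    qed
  qed simp
  also have "\<dots> = hT m P T (card A)"
    unfolding hT_def by (rule exp_fin[OF P, symmetric])
  finally show ?thesis .
qed

lemma prob_fin:
  fixes P :: "nat pmf"
  assumes "set_pmf P \<subseteq> {..m}"
  shows "measure_pmf.prob P X = (\<Sum>k\<le>m. pmf P k * indicator X k)"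
  unfolding prob_as_exp by (rule exp_fin[OF assms])

lemma prob_attr_card:
  assumes P: "set_pmf P \<subseteq> {..m}"
  shows "measure_pmf.prob (attr_pmf m P) {S. real (card S) > T} = measure_pmf.prob P {k. real k > T}"
proof -
  let ?X = "{S. real (card S) > T}"
  have "measure_pmf.prob (attr_pmf m P) ?X
      = (\<Sum>k\<le>m. pmf P k * (real (card (Uk m k \<inter> ?X)) / real (card (Uk m k))))"
    by (rule prob_attr_bind[OF P])
  also have "\<dots> = (\<Sum>k\<le>m. pmf P k * indicator {k. real k > T} k)"
  proof (rule sum.cong[OF refl])
    fix k assume "k \<in> {..m}"
    hence km: "k \<le> m" by simp
    have ne: "card (Uk m k) > 0" using Uk_finite Uk_ne[OF km] by (simp add: card_gt_0_iff)
    show "pmf P k * (real (card (Uk m k \<inter> ?X)) / real (card (Uk m k)))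
          = pmf P k * indicator {k. real k > T} k"
    proof (cases "real k > T")
      case True
      hence "Uk m k \<inter> ?X = Uk m k" unfolding Uk_def by auto
      thus ?thesis using True ne by simp
    next
      case False
      hence "Uk m k \<inter> ?X = {}" unfolding Uk_def by auto
      thus ?thesis using False by simp
    qed
  qed
  also have "\<dots> = measure_pmf.prob P {k. real k > T}"
    by (rule prob_fin[OF P, symmetric])
  finally show ?thesis .
qed




lemma set_RIG:
  assumes "S \<in> set_pmf (RIG n m P)" "v < n"
  shows "S v \<in> set_pmf (attr_pmf m P)"
  using assms unfolding RIG_def by (auto simp: set_Pi_pmf PiE_dflt_def)

lemma finite_RIG:
  assumes "set_pmf P \<subseteq> {..m}"
  shows "finite (set_pmf (RIG n m P))"
  unfolding RIG_def using finite_attr[OF assms] by (auto simp: set_Pi_pmf)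

definition Inj :: "nat \<Rightarrow> nat \<Rightarrow> (nat \<Rightarrow> nat) set" where
  "Inj k n = {f \<in> {..<k} \<rightarrow>\<^sub>E {..<n}. inj_on f {..<k}}"

lemma Inj_finite: "finite (Inj k n)"
  unfolding Inj_def by (rule finite_subset[of _ "{..<k} \<rightarrow>\<^sub>E {..<n}"]) (auto intro: finite_PiE)

lemma Inj_card: "card (Inj k n) \<le> n ^ k"
proof -
  have "card (Inj k n) \<le> card ({..<k} \<rightarrow>\<^sub>E {..<n})"
    unfolding Inj_def by (rule card_mono) (auto intro: finite_PiE)
  also have "\<dots> = n ^ k" by (simp add: card_PiE)
  finally show ?thesis .
qed

lemma prob_RIG_prod:
  assumes phi: "\<phi> \<in> Inj k n"
  shows "measure_pmf.prob (RIG n m P) {S. \<forall>i<k. S (\<phi> i) \<in> B i}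
        = (\<Prod>i<k. measure_pmf.prob (attr_pmf m P) (B i))"
proof -
  have inj: "inj_on \<phi> {..<k}" and rng: "\<phi> ` {..<k} \<subseteq> {..<n}"
    using phi unfolding Inj_def by (auto simp: PiE_def)
  define B' where "B' = (\<lambda>v. if v \<in> \<phi> ` {..<k} then B (the_inv_into {..<k} \<phi> v) else UNIV)"
  have eq: "{S. \<forall>i<k. S (\<phi> i) \<in> B i} = Pi {..<n} B'"
  proof (intro set_eqI iffI)
    fix S assume S: "S \<in> {S. \<forall>i<k. S (\<phi> i) \<in> B i}"
    show "S \<in> Pi {..<n} B'"
    proof (rule Pi_I)
      fix v assume "v \<in> {..<n}"
      show "S v \<in> B' v"
      proof (cases "v \<in> \<phi> ` {..<k}")
        case True
        then obtain i where i: "i < k" "v = \<phi> i" by auto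
        have "the_inv_into {..<k} \<phi> v = i" using i inj by (simp add: the_inv_into_f_f)
        thus ?thesis using S i True unfolding B'_def by auto
      qed (auto simp: B'_def)
    qed
  next
    fix S assume S: "S \<in> Pi {..<n} B'"
    { fix i assume i: "i < k"
      have v: "\<phi> i \<in> {..<n}" using rng i by auto
      have "the_inv_into {..<k} \<phi> (\<phi> i) = i" using i inj by (simp add: the_inv_into_f_f)
      hence "S (\<phi> i) \<in> B i" using S v i unfolding B'_def by (auto simp: Pi_def) }
    thus "S \<in> {S. \<forall>i<k. S (\<phi> i) \<in> B i}" by auto
  qed
  have "measure_pmf.prob (RIG n m P) {S. \<forall>i<k. S (\<phi> i) \<in> B i}
      = (\<Prod>v<n. measure_pmf.prob (attr_pmf m P) (B' v))"
    unfolding eq RIG_def by (rule measure_Pi_pmf_Pi) simp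
  also have "\<dots> = (\<Prod>v\<in>\<phi> ` {..<k}. measure_pmf.prob (attr_pmf m P) (B' v))"
    by (rule prod.mono_neutral_right) (use rng in \<open>auto simp: B'_def\<close>)
  also have "\<dots> = (\<Prod>i<k. measure_pmf.prob (attr_pmf m P) (B' (\<phi> i)))"
    by (simp add: prod.reindex[OF inj])
  also have "\<dots> = (\<Prod>i<k. measure_pmf.prob (attr_pmf m P) (B i))"
    by (rule prod.cong[OF refl]) (use inj in \<open>auto simp: B'_def the_inv_into_f_f\<close>)
  finally show ?thesis .
qed




definition lf :: "nat list \<Rightarrow> nat \<Rightarrow> nat" where
  "lf xs = (\<lambda>i. if i < length xs then xs ! i else undefined)"

lemma lf_Inj:
  assumes "distinct xs" "set xs \<subseteq> {..<n}"
  shows "lf xs \<in> Inj (length xs) n"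
  using assms unfolding Inj_def lf_def
  by (auto simp: PiE_def extensional_def inj_on_def nth_eq_iff_index_eq) (meson lessThan_iff nth_mem subsetD)

definition emb :: "nat \<Rightarrow> nat \<Rightarrow> real \<Rightarrow> nat set list \<Rightarrow> nat \<Rightarrow> (nat \<Rightarrow> nat set)
     \<Rightarrow> ((nat \<Rightarrow> nat) \<times> (nat \<Rightarrow> nat)) set" where
  "emb n m T Ns l S = {(\<phi>,\<psi>) \<in> Inj (length Ns) n \<times> Inj l m.
      \<forall>i<length Ns. \<psi> ` (Ns ! i) \<subseteq> S (\<phi> i) \<and> real (card (S (\<phi> i))) \<le> T}"

lemma hT_nonneg: "hT m P T d \<ge> 0"
  unfolding hT_def by (intro Bochner_Integration.integral_nonneg) auto

lemma exp_emb:
  assumes P: "set_pmf P \<subseteq> {..m}" and Ns: "\<forall>i<length Ns. Ns ! i \<subseteq> {..<l}"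
  shows "measure_pmf.expectation (RIG n m P) (\<lambda>S. real (card (emb n m T Ns l S)))
         \<le> real n ^ length Ns * real m ^ l * (\<Prod>i<length Ns. hT m P T (card (Ns ! i)))"
proof -
  let ?k = "length Ns"
  let ?I = "Inj ?k n \<times> Inj l m"
  define Q :: "((nat\<Rightarrow>nat)\<times>(nat\<Rightarrow>nat)) \<Rightarrow> (nat \<Rightarrow> nat set) \<Rightarrow> bool" where "Q = (\<lambda>x S. \<forall>i<?k. snd x ` (Ns ! i) \<subseteq> S (fst x i) \<and> real (card (S (fst x i))) \<le> T)"
  let ?H = "(\<Prod>i<?k. hT m P T (card (Ns ! i)))"
  have fI: "finite ?I" using Inj_finite by auto
  have cardeq: "real (card (emb n m T Ns l S)) = (\<Sum>x\<in>?I. (indicator {S. Q x S} S :: real))" for S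
  proof -
    have "emb n m T Ns l S = {x \<in> ?I. Q x S}" unfolding emb_def Q_def by fastforce
    hence "real (card (emb n m T Ns l S)) = (\<Sum>x\<in>{x \<in> ?I. Q x S}. 1)" by simp
    also have "\<dots> = (\<Sum>x\<in>?I. if Q x S then 1 else 0)" by (rule sum.inter_filter[OF fI])
    also have "\<dots> = (\<Sum>x\<in>?I. (indicator {S. Q x S} S :: real))" by (rule sum.cong) (auto simp: indicator_def)
    finally show ?thesis .
  qed
  have "measure_pmf.expectation (RIG n m P) (\<lambda>S. real (card (emb n m T Ns l S)))
      = measure_pmf.expectation (RIG n m P) (\<lambda>S. \<Sum>x\<in>?I. (indicator {S. Q x S} S :: real))"
    by (simp only: cardeq)
  also have "\<dots> = (\<Sum>x\<in>?I. measure_pmf.expectation (RIG n m P) (indicator {S. Q x S}))"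
    by (rule Bochner_Integration.integral_sum) (use finite_RIG[OF P] in \<open>auto intro: integrable_measure_pmf_finite\<close>)
  also have "\<dots> = (\<Sum>x\<in>?I. measure_pmf.prob (RIG n m P) {S. Q x S})"
    by (rule sum.cong[OF refl]) (rule prob_as_exp[symmetric])
  also have "\<dots> \<le> (\<Sum>x\<in>?I. ?H)"
  proof (rule sum_mono)
    fix x assume x: "x \<in> ?I"
    obtain \<phi> \<psi> where xe: "x = (\<phi>, \<psi>)" by (cases x)
    have phi: "\<phi> \<in> Inj ?k n" and psi: "\<psi> \<in> Inj l m" using x xe by auto
    have injpsi: "inj_on \<psi> {..<l}" and rpsi: "\<psi> ` {..<l} \<subseteq> {..<m}"
      using psi unfolding Inj_def by (auto simp: PiE_def)
    have QE: "{S. Q x S} = {S. \<forall>i<?k. S (\<phi> i) \<in> {X. \<psi> ` (Ns ! i) \<subseteq> X \<and> real (card X) \<le> T}}"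
      unfolding Q_def xe by auto
    have "measure_pmf.prob (RIG n m P) {S. Q x S}
        = (\<Prod>i<?k. measure_pmf.prob (attr_pmf m P) {X. \<psi> ` (Ns ! i) \<subseteq> X \<and> real (card X) \<le> T})"
      unfolding QE by (rule prob_RIG_prod[OF phi])
    also have "\<dots> \<le> ?H"
    proof (rule prod_mono, rule conjI)
      fix i assume i: "i \<in> {..<?k}"
      have sub: "Ns ! i \<subseteq> {..<l}" using Ns i by auto
      have "card (\<psi> ` (Ns ! i)) = card (Ns ! i)"
        by (rule card_image) (rule inj_on_subset[OF injpsi sub])
      moreover have "\<psi> ` (Ns ! i) \<subseteq> {..<m}" using rpsi sub by auto
      ultimately show "measure_pmf.prob (attr_pmf m P) {X. \<psi> ` (Ns ! i) \<subseteq> X \<and> real (card X) \<le> T}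
          \<le> hT m P T (card (Ns ! i))"
        using prob_attr_le[OF P, of "\<psi> ` (Ns ! i)" T] by simp
    qed simp
    finally show "measure_pmf.prob (RIG n m P) {S. Q x S} \<le> ?H" .
  qed
  also have "\<dots> = real (card (Inj ?k n)) * real (card (Inj l m)) * ?H"
    by (simp add: card_cartesian_product)
  also have "\<dots> \<le> real n ^ ?k * real m ^ l * ?H"
  proof (rule mult_right_mono)
    have "real (card (Inj ?k n)) \<le> real n ^ ?k" using Inj_card[of ?k n] by (metis of_nat_le_iff of_nat_power)
    moreover have "real (card (Inj l m)) \<le> real m ^ l" using Inj_card[of l m] by (metis of_nat_le_iff of_nat_power)
    ultimately show "real (card (Inj ?k n)) * real (card (Inj l m)) \<le> real n ^ ?k * real m ^ l"
      by (intro mult_mono) auto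
    show "0 \<le> ?H" by (intro prod_nonneg hT_nonneg)
  qed
  finally show ?thesis .
qed




lemma prob_trunc:
  assumes P: "set_pmf P \<subseteq> {..m}"
  shows "measure_pmf.prob (RIG n m P) {S. \<exists>v<n. real (card (S v)) > T}
         \<le> real n * measure_pmf.prob P {k. real k > T}"
proof -
  have one: "measure_pmf.prob (RIG n m P) {S. real (card (S v)) > T} = measure_pmf.prob P {k. real k > T}"
    if v: "v < n" for v
  proof -
    have phi: "lf [v] \<in> Inj (length [v]) n" by (rule lf_Inj) (use v in auto)
    have QE: "{S. real (card (S v)) > T} = {S. \<forall>i<length [v]. S (lf [v] i) \<in> {X. real (card X) > T}}"
      by (auto simp: lf_def)
    have "measure_pmf.prob (RIG n m P) {S. real (card (S v)) > T}
       = (\<Prod>i<length [v]. measure_pmf.prob (attr_pmf m P) {X. real (card X) > T})"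
      unfolding QE by (rule prob_RIG_prod[OF phi])
    also have "\<dots> = measure_pmf.prob (attr_pmf m P) {X. real (card X) > T}" by simp
    also have "\<dots> = measure_pmf.prob P {k. real k > T}" by (rule prob_attr_card[OF P])
    finally show ?thesis .
  qed
  have UE: "{S. \<exists>v<n. real (card (S v)) > T} = (\<Union>v\<in>{..<n}. {S. real (card (S v)) > T})" by auto
  have "measure_pmf.prob (RIG n m P) {S. \<exists>v<n. real (card (S v)) > T}
      \<le> (\<Sum>v\<in>{..<n}. measure_pmf.prob (RIG n m P) {S. real (card (S v)) > T})"
    using measure_pmf.finite_measure_subadditive_finite[of "{..<n}" "\<lambda>v. {S. real (card (S v)) > T}" "RIG n m P"]
    unfolding UE by simp
  also have "\<dots> = (\<Sum>v\<in>{..<n}. measure_pmf.prob P {k. real k > T})"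
    by (rule sum.cong[OF refl]) (use one in auto)
  also have "\<dots> = real n * measure_pmf.prob P {k. real k > T}" by simp
  finally show ?thesis .
qed

definition EY2 :: "nat \<Rightarrow> nat \<Rightarrow> nat pmf \<Rightarrow> real" where
  "EY2 n m P = measure_pmf.expectation P (\<lambda>k. (Yval n m k)\<^sup>2)"

lemma Yval_sq: "m > 0 \<Longrightarrow> n > 0 \<Longrightarrow> (real k / real m)\<^sup>2 = (Yval n m k)\<^sup>2 / (real n * real m)"
  unfolding Yval_def by (simp add: power_mult_distrib power2_eq_square field_simps)

lemma hT_bound:
  assumes P: "set_pmf P \<subseteq> {..m}" and m: "m > 0" and n: "n > 0" and T: "T \<ge> 0" and d: "d \<ge> 2"
  shows "hT m P T d \<le> (T / real m) ^ (d - 2) * EY2 n m P / (real n * real m)"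
proof -
  have fin: "finite (set_pmf P)" using P finite_subset by blast
  have "hT m P T d \<le> measure_pmf.expectation P (\<lambda>k. (T / real m) ^ (d - 2) / (real n * real m) * (Yval n m k)\<^sup>2)"
    unfolding hT_def
  proof (rule integral_mono)
    show "integrable (measure_pmf P) (\<lambda>k. if real k \<le> T then (real k / real m) ^ d else 0)"
      by (rule integrable_measure_pmf_finite[OF fin])
    show "integrable (measure_pmf P) (\<lambda>k. (T / real m) ^ (d - 2) / (real n * real m) * (Yval n m k)\<^sup>2)"
      by (rule integrable_measure_pmf_finite[OF fin])
    fix k
    show "(if real k \<le> T then (real k / real m) ^ d else 0)
          \<le> (T / real m) ^ (d - 2) / (real n * real m) * (Yval n m k)\<^sup>2"
    proof (cases "real k \<le> T")
      case True
      have "(real k / real m) ^ d = (real k / real m) ^ (d - 2) * (real k / real m)\<^sup>2"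
        using d by (metis le_add_diff_inverse2 power_add)
      also have "\<dots> \<le> (T / real m) ^ (d - 2) * (real k / real m)\<^sup>2"
        by (intro mult_right_mono power_mono divide_right_mono True) auto
      also have "\<dots> = (T / real m) ^ (d - 2) / (real n * real m) * (Yval n m k)\<^sup>2"
        using Yval_sq[OF m n, of k] by simp
      finally show ?thesis using True by simp
    next
      case False
      have "0 \<le> (T / real m) ^ (d - 2) / (real n * real m) * (Yval n m k)\<^sup>2"
        using T by simp
      thus ?thesis using False by simp
    qed
  qed
  also have "\<dots> = (T / real m) ^ (d - 2) / (real n * real m) * EY2 n m P"
    unfolding EY2_def by simp
  also have "\<dots> = (T / real m) ^ (d - 2) * EY2 n m P / (real n * real m)" by simp
  finally show ?thesis .
qed

lemma EY2_nonneg: "EY2 n m P \<ge> 0"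
  unfolding EY2_def by (intro Bochner_Integration.integral_nonneg) auto

lemma EY2_bound:
  assumes P: "set_pmf P \<subseteq> {..m}"
    and E: "\<bar>measure_pmf.expectation P (Yval n m)\<bar> \<le> B"
    and V: "\<bar>measure_pmf.variance P (Yval n m)\<bar> \<le> B"
  shows "EY2 n m P \<le> B + B\<^sup>2"
proof -
  have fin: "finite (set_pmf P)" using P finite_subset by blast
  have "measure_pmf.variance P (Yval n m) = EY2 n m P - (measure_pmf.expectation P (Yval n m))\<^sup>2"
    unfolding EY2_def
    by (rule measure_pmf.variance_eq) (auto intro: integrable_measure_pmf_finite[OF fin])
  moreover have "(measure_pmf.expectation P (Yval n m))\<^sup>2 \<le> B\<^sup>2"
    using E by (metis abs_ge_zero power2_abs power_mono)
  ultimately show ?thesis using V by linarith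
qed




lemma emb_mem:
  assumes "distinct vs" "set vs \<subseteq> {..<n}" "distinct as" "set as \<subseteq> {..<m}"
    "length Ns = length vs" "length as = l"
    "\<forall>i<length vs. (\<forall>j\<in>Ns!i. as!j \<in> S (vs!i)) \<and> real (card (S (vs!i))) \<le> T"
    "\<forall>i<length Ns. Ns!i \<subseteq> {..<l}"
  shows "(lf vs, lf as) \<in> emb n m T Ns l S"
proof -
  have "lf vs \<in> Inj (length Ns) n" using lf_Inj[OF assms(1,2)] assms(5) by simp
  moreover have "lf as \<in> Inj l m" using lf_Inj[OF assms(3,4)] assms(6) by simp
  moreover have "\<forall>i<length Ns. lf as ` (Ns ! i) \<subseteq> S (lf vs i) \<and> real (card (S (lf vs i))) \<le> T"
  proof (intro allI impI conjI)
    fix i assume i: "i < length Ns"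
    show "lf as ` (Ns ! i) \<subseteq> S (lf vs i)"
    proof
      fix x assume "x \<in> lf as ` (Ns ! i)"
      then obtain j where j: "j \<in> Ns ! i" "x = lf as j" by auto
      have "j < l" using j assms(8) i by auto
      hence "x = as ! j" using j assms(6) by (simp add: lf_def)
      thus "x \<in> S (lf vs i)" using assms(7) i j assms(5) by (auto simp: lf_def)
    qed
    show "real (card (S (lf vs i))) \<le> T" using assms(7) i assms(5) by (auto simp: lf_def)
  qed
  ultimately show ?thesis unfolding emb_def by auto
qed

lemma emb_finite: "finite (emb n m T Ns l S)"
  by (rule finite_subset[of _ "Inj (length Ns) n \<times> Inj l m"]) (auto simp: emb_def Inj_finite)

lemma cliques_finite: "finite {K. is_clique n S K}"
  by (rule finite_subset[of _ "Pow {..<n}"]) (auto simp: is_clique_def)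

lemma clique_card_le: "is_clique n S K \<Longrightarrow> card K \<le> clique_number n S"
  unfolding clique_number_def using cliques_finite by (intro Max_ge) auto

lemma clique_number_le:
  assumes "\<And>K. is_clique n S K \<Longrightarrow> card K \<le> b"
  shows "clique_number n S \<le> b"
proof -
  have "is_clique n S {}" by (simp add: is_clique_def)
  thus ?thesis unfolding clique_number_def using cliques_finite assms
    by (intro Max.boundedI) auto
qed

lemma mono_ge: "w < m \<Longrightarrow> card {v\<in>{..<n}. w \<in> S v} \<le> mono_clique_number n m S"
  unfolding mono_clique_number_def by (intro Max_ge) auto

lemma mono_le_clique: "mono_clique_number n m S \<le> clique_number n S"
  unfolding mono_clique_number_def
proof (intro Max.boundedI)
  fix x assume "x \<in> insert 0 ((\<lambda>w. card {v \<in> {..<n}. w \<in> S v}) ` {..<m})"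
  then consider "x = 0" | w where "x = card {v \<in> {..<n}. w \<in> S v}" by auto
  thus "x \<le> clique_number n S"
  proof cases
    case 2
    have "is_clique n S {v \<in> {..<n}. w \<in> S v}" unfolding is_clique_def by auto
    thus ?thesis using 2 clique_card_le by simp
  qed simp
qed auto

definition Rset :: "nat \<Rightarrow> nat \<Rightarrow> (nat \<Rightarrow> nat set) \<Rightarrow> nat set" where
  "Rset n m S = (\<lambda>x. fst x 0) ` (emb n m (real m) [{0,1},{0,1}] 2 S \<union> emb n m (real m) [{0,2},{0,1},{1,2}] 3 S)"

lemma Rset_card: "card (Rset n m S) \<le> card (emb n m (real m) [{0,1},{0,1}] 2 S) + card (emb n m (real m) [{0,2},{0,1},{1,2}] 3 S)"
  unfolding Rset_def
  by (rule order.trans[OF card_image_le card_Un_le]) (simp add: emb_finite)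

lemma card_small_S: "S \<subseteq> {..<m} \<Longrightarrow> real (card S) \<le> real m"
  using card_mono[of "{..<m}" S] by simp

lemma clique_part1:
  assumes hS: "\<forall>v<n. S v \<subseteq> {..<m}" and K: "is_clique n S K"
  shows "card K \<le> card (Rset n m S) + max 1 (mono_clique_number n m S)"
proof -
  have Kn: "K \<subseteq> {..<n}" and adj: "\<And>u v. u \<in> K \<Longrightarrow> v \<in> K \<Longrightarrow> u \<noteq> v \<Longrightarrow> S u \<inter> S v \<noteq> {}"
    using K unfolding is_clique_def by auto
  have fK: "finite K" using Kn finite_subset by blast
  have cT: "real (card (S v)) \<le> real m" if "v < n" for v using hS that card_small_S by blast
  let ?K' = "K - Rset n m S"
  have "card ?K' \<le> max 1 (mono_clique_number n m S)"
  proof (cases "card ?K' \<le> 1")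
    case True thus ?thesis by simp
  next
    case False
    then obtain u v where uv: "u \<in> ?K'" "v \<in> ?K'" "u \<noteq> v"
      using False card_le_Suc0_iff_eq[of ?K'] fK by auto
    have un: "u < n" "v < n" using uv Kn by auto
    obtain a where a: "a \<in> S u" "a \<in> S v" using adj[of u v] uv by auto
    have am: "a < m" using a hS un by auto
    have sub: "?K' \<subseteq> {y\<in>{..<n}. a \<in> S y}"
    proof
      fix y assume y: "y \<in> ?K'"
      have yn: "y < n" using y Kn by auto
      show "y \<in> {y\<in>{..<n}. a \<in> S y}"
      proof (rule ccontr)
        assume "y \<notin> {y\<in>{..<n}. a \<in> S y}"
        hence ay: "a \<notin> S y" using yn by auto
        hence yu: "y \<noteq> u" "y \<noteq> v" using a by auto
        obtain c where c: "c \<in> S u" "c \<in> S y" using adj[of u y] uv y yu by auto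
        obtain b where b: "b \<in> S v" "b \<in> S y" using adj[of v y] uv y yu by auto
        have bcm: "b < m" "c < m" using b c hS un yn by auto
        show False
        proof (cases "b = c")
          case True
          have "(lf [u,v], lf [a,b]) \<in> emb n m (real m) [{0,1},{0,1}] 2 S"
            by (rule emb_mem) (use uv un a b c True ay am bcm cT in \<open>auto simp: less_Suc_eq numeral_eq_Suc\<close>)
          hence "u \<in> Rset n m S" unfolding Rset_def by (force simp: lf_def)
          thus False using uv by auto
        next
          case False
          have "(lf [u,v,y], lf [a,b,c]) \<in> emb n m (real m) [{0,2},{0,1},{1,2}] 3 S"
            by (rule emb_mem) (use uv un yn yu a b c False ay am bcm cT in \<open>auto simp: less_Suc_eq numeral_eq_Suc\<close>)
          hence "u \<in> Rset n m S" unfolding Rset_def by (force simp: lf_def)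
          thus False using uv by auto
        qed
      qed
    qed
    hence "card ?K' \<le> card {y\<in>{..<n}. a \<in> S y}" by (intro card_mono) auto
    also have "\<dots> \<le> mono_clique_number n m S" by (rule mono_ge[OF am])
    finally show ?thesis by simp
  qed
  moreover have "card K \<le> card (Rset n m S) + card ?K'"
  proof -
    have "card K \<le> card (K \<inter> Rset n m S) + card ?K'"
      using fK by (metis card_Un_le Int_Diff_Un)
    moreover have "card (K \<inter> Rset n m S) \<le> card (Rset n m S)"
      by (rule card_mono) (auto simp: Rset_def emb_finite)
    ultimately show ?thesis by simp
  qed
  ultimately show ?thesis by simp
qed




definition noBad :: "nat \<Rightarrow> nat \<Rightarrow> real \<Rightarrow> (nat \<Rightarrow> nat set) \<Rightarrow> bool" where
  "noBad n m T S \<longleftrightarrow>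
     emb n m T [{0,1,2},{0,1,2}] 3 S = {} \<and>
     emb n m T [{0,1},{0,1},{0,1}] 2 S = {} \<and>
     emb n m T [{0,1},{0,1},{0,2},{1,2}] 3 S = {} \<and>
     emb n m T [{0,1,2},{0,1,3},{2,3}] 4 S = {} \<and>
     emb n m T [{0,1},{0,2},{0,3},{1,2,3}] 4 S = {} \<and>
     emb n m T [{0,2,3},{0,1,4},{1,2,5},{3,4,5}] 6 S = {}"

lemma clique_part2:
  assumes hS: "\<forall>v<n. S v \<subseteq> {..<m}" and htr: "\<forall>v<n. real (card (S v)) \<le> T"
    and nb: "noBad n m T S" and K: "is_clique n S K" and K4: "card K \<ge> 4"
  shows "\<exists>a<m. K \<subseteq> {v\<in>{..<n}. a \<in> S v}"
proof -
  have Kn: "K \<subseteq> {..<n}" and adj: "\<And>u v. u \<in> K \<Longrightarrow> v \<in> K \<Longrightarrow> u \<noteq> v \<Longrightarrow> S u \<inter> S v \<noteq> {}"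
    using K unfolding is_clique_def by auto
  have fK: "finite K" using Kn finite_subset by blast
  have inn: "\<And>v. v \<in> K \<Longrightarrow> v < n" using Kn by auto
  have am: "a < m" if "v \<in> K" "a \<in> S v" for a v using hS Kn that by auto
  have tr: "\<And>v. v \<in> K \<Longrightarrow> real (card (S v)) \<le> T" using htr Kn by auto
  have nb1: "emb n m T [{0,1,2},{0,1,2}] 3 S = {}"
   and nb2: "emb n m T [{0,1},{0,1},{0,1}] 2 S = {}"
   and nb4: "emb n m T [{0,1},{0,1},{0,2},{1,2}] 3 S = {}"
   and nb5: "emb n m T [{0,1,2},{0,1,3},{2,3}] 4 S = {}"
   and nb6: "emb n m T [{0,1},{0,2},{0,3},{1,2,3}] 4 S = {}"
   and nb7: "emb n m T [{0,2,3},{0,1,4},{1,2,5},{3,4,5}] 6 S = {}"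
    using nb unfolding noBad_def by auto
  show ?thesis
  proof (cases "\<exists>u\<in>K. \<exists>v\<in>K. u \<noteq> v \<and> (\<exists>a b. a \<noteq> b \<and> a \<in> S u \<and> a \<in> S v \<and> b \<in> S u \<and> b \<in> S v)")
    case True
    then obtain u v a b where uv: "u \<in> K" "v \<in> K" "u \<noteq> v" and ab: "a \<noteq> b" "a \<in> S u" "a \<in> S v" "b \<in> S u" "b \<in> S v"
      by blast
    have c1: "a \<in> S y \<or> b \<in> S y" if y: "y \<in> K" "y \<noteq> u" "y \<noteq> v" for y
    proof (rule ccontr)
      assume nab: "\<not> (a \<in> S y \<or> b \<in> S y)"
      obtain \<alpha> where al: "\<alpha> \<in> S y" "\<alpha> \<in> S u" using adj[of y u] y uv by auto
      obtain \<beta> where be: "\<beta> \<in> S y" "\<beta> \<in> S v" using adj[of y v] y uv by auto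
      show False
      proof (cases "\<alpha> = \<beta>")
        case True
        have "(lf [u,v], lf [a,b,\<alpha>]) \<in> emb n m T [{0,1,2},{0,1,2}] 3 S"
          by (rule emb_mem) (use uv ab al be True nab inn[of u] inn[of v] am[of u a] am[of u b] am[of u \<alpha>] tr[of u] tr[of v]
               in \<open>auto simp: less_Suc_eq numeral_eq_Suc\<close>)
        thus False using nb1 by auto
      next
        case False
        have "(lf [u,v,y], lf [a,b,\<alpha>,\<beta>]) \<in> emb n m T [{0,1,2},{0,1,3},{2,3}] 4 S"
          by (rule emb_mem) (use uv y ab al be False nab inn[of u] inn[of v] inn[of y] am[of u a] am[of u b] am[of u \<alpha>] am[of v \<beta>] tr[of u] tr[of v] tr[of y]
               in \<open>auto simp: less_Suc_eq numeral_eq_Suc\<close>)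
        thus False using nb5 by auto
      qed
    qed
    have c2: "\<not> (a \<in> S y \<and> b \<in> S y)" if y: "y \<in> K" "y \<noteq> u" "y \<noteq> v" for y
    proof
      assume yab: "a \<in> S y \<and> b \<in> S y"
      have "(lf [u,v,y], lf [a,b]) \<in> emb n m T [{0,1},{0,1},{0,1}] 2 S"
        by (rule emb_mem) (use uv y ab yab inn[of u] inn[of v] inn[of y] am[of u a] am[of u b] tr[of u] tr[of v] tr[of y]
             in \<open>auto simp: less_Suc_eq numeral_eq_Suc\<close>)
      thus False using nb2 by auto
    qed
    have c3: False if y: "y \<in> K" "y \<noteq> u" "y \<noteq> v" "a \<in> S y" and y': "y' \<in> K" "y' \<noteq> u" "y' \<noteq> v" "b \<in> S y'" for y y'
    proof -
      have nb': "b \<notin> S y" "a \<notin> S y'" using c2[OF y(1-3)] c2[OF y'(1-3)] y y' by auto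
      hence yy: "y \<noteq> y'" using y by auto
      obtain p where p: "p \<in> S y" "p \<in> S y'" using adj[of y y'] y y' yy by auto
      have "(lf [u,v,y,y'], lf [a,b,p]) \<in> emb n m T [{0,1},{0,1},{0,2},{1,2}] 3 S"
        by (rule emb_mem) (use uv y y' yy ab p nb' inn[of u] inn[of v] inn[of y] inn[of y'] am[of u a] am[of u b] am[of y p] tr[of u] tr[of v] tr[of y] tr[of y']
             in \<open>auto simp: less_Suc_eq numeral_eq_Suc\<close>)
      thus False using nb4 by auto
    qed
    show ?thesis
    proof (cases "\<forall>y\<in>K. a \<in> S y")
      case True
      thus ?thesis using am[of u a] uv ab inn by auto
    next
      case False
      then obtain y0 where y0: "y0 \<in> K" "a \<notin> S y0" by auto
      have y0uv: "y0 \<noteq> u" "y0 \<noteq> v" using y0 ab by auto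
      have by0: "b \<in> S y0" using c1[OF y0(1) y0uv] y0 by auto
      have "\<forall>y\<in>K. b \<in> S y"
      proof
        fix y assume y: "y \<in> K"
        show "b \<in> S y"
        proof (cases "y = u \<or> y = v")
          case True thus ?thesis using ab by auto
        next
          case False
          hence yuv: "y \<noteq> u" "y \<noteq> v" by auto
          show ?thesis
          proof (rule ccontr)
            assume "b \<notin> S y"
            hence "a \<in> S y" using c1[OF y yuv] by auto
            thus False using c3[OF y yuv _ y0(1) y0uv by0] by auto
          qed
        qed
      qed
      thus ?thesis using am[of u b] uv ab inn by auto
    qed
  next
    case False
    hence uniq: "\<And>p q x w. p \<in> K \<Longrightarrow> q \<in> K \<Longrightarrow> p \<noteq> q \<Longrightarrow> x \<in> S p \<Longrightarrow> x \<in> S q \<Longrightarrow> w \<in> S p \<Longrightarrow> w \<in> S q \<Longrightarrow> x = w"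
      by blast
    obtain u v where uv: "u \<in> K" "v \<in> K" "u \<noteq> v"
      using K4 card_le_Suc0_iff_eq[of K] fK by auto
    obtain a where a: "a \<in> S u" "a \<in> S v" using adj[of u v] uv by auto
    show ?thesis
    proof (cases "\<forall>y\<in>K. a \<in> S y")
      case True
      thus ?thesis using am[of u a] uv a inn by auto
    next
      case False
      then obtain y where y: "y \<in> K" "a \<notin> S y" by auto
      have yuv: "y \<noteq> u" "y \<noteq> v" using y a by auto
      obtain c where c: "c \<in> S u" "c \<in> S y" using adj[of u y] uv y yuv by auto
      obtain b where b: "b \<in> S v" "b \<in> S y" using adj[of v y] uv y yuv by auto
      have "card (K - {u,v,y}) > 0"
      proof -
        have "card {u,v,y} \<le> 3" by (simp add: card_insert_if)
        moreover have "card K - card {u,v,y} \<le> card (K - {u,v,y})"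
          by (rule diff_card_le_card_Diff) simp
        ultimately show ?thesis using K4 by linarith
      qed
      then obtain z where z0: "z \<in> K - {u,v,y}"
        by (metis card_gt_0_iff ex_in_conv)
      hence z: "z \<in> K" "z \<noteq> u" "z \<noteq> v" "z \<noteq> y" by auto
      obtain \<alpha> where al: "\<alpha> \<in> S z" "\<alpha> \<in> S u" using adj[of z u] z uv by auto
      obtain \<beta> where be: "\<beta> \<in> S z" "\<beta> \<in> S v" using adj[of z v] z uv by auto
      obtain \<gamma> where ga: "\<gamma> \<in> S z" "\<gamma> \<in> S y" using adj[of z y] z y by auto
      have ba: "b \<noteq> a" using b y by auto
      have ca: "c \<noteq> a" using c y by auto
      have Uuv: "x = w" if "x \<in> S u" "x \<in> S v" "w \<in> S u" "w \<in> S v" for x w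
        using uniq[OF uv(1) uv(2) uv(3)] that by blast
      have Uzu: "x = w" if "x \<in> S z" "x \<in> S u" "w \<in> S z" "w \<in> S u" for x w
        using uniq[OF z(1) uv(1) z(2)] that by blast
      have Uzv: "x = w" if "x \<in> S z" "x \<in> S v" "w \<in> S z" "w \<in> S v" for x w
        using uniq[OF z(1) uv(2) z(3)] that by blast
      have Uzy: "x = w" if "x \<in> S z" "x \<in> S y" "w \<in> S z" "w \<in> S y" for x w
        using uniq[OF z(1) y(1) z(4)] that by blast
      have Uuy: "x = w" if "x \<in> S u" "x \<in> S y" "w \<in> S u" "w \<in> S y" for x w
        using uniq[OF uv(1) y(1) yuv(1)[symmetric]] that by blast
      have Uvy: "x = w" if "x \<in> S v" "x \<in> S y" "w \<in> S v" "w \<in> S y" for x w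
        using uniq[OF uv(2) y(1) yuv(2)[symmetric]] that by blast
      have bc: "b \<noteq> c"
      proof
        assume "b = c" hence "b = a" using Uuv[of b a] b c a by simp
        thus False using ba by simp
      qed
      have all_in: "u < n" "v < n" "y < n" "z < n" using inn uv y z by auto
      have trs: "real (card (S u)) \<le> T" "real (card (S v)) \<le> T" "real (card (S y)) \<le> T" "real (card (S z)) \<le> T"
        using tr uv y z by auto
      have ms: "a < m" "b < m" "c < m" "\<alpha> < m" "\<beta> < m" "\<gamma> < m"
        using am uv y z a b c al be ga by auto
      show ?thesis
      proof (rule ccontr)
        assume "\<not> ?thesis"
        show False
        proof (cases "\<alpha> = a")
          case True
          have az: "a \<in> S z" using al True by simp
          have gn: "\<gamma> \<noteq> a" "\<gamma> \<noteq> b" "\<gamma> \<noteq> c"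
          proof -
            show "\<gamma> \<noteq> a" using ga y by auto
            show "\<gamma> \<noteq> b"
            proof
              assume "\<gamma> = b" hence "b = a" using Uzv[of b a] ga b az a by simp
              thus False using ba by simp
            qed
            show "\<gamma> \<noteq> c"
            proof
              assume "\<gamma> = c" hence "c = a" using Uzu[of c a] ga c az a by simp
              thus False using ca by simp
            qed
          qed
          have "(lf [u,v,z,y], lf [a,c,b,\<gamma>]) \<in> emb n m T [{0,1},{0,2},{0,3},{1,2,3}] 4 S"
            by (rule emb_mem) (use uv y yuv z a b c ga az gn ba ca bc all_in trs ms
                 in \<open>auto simp: less_Suc_eq numeral_eq_Suc\<close>)
          thus False using nb6 by auto
        next
          case al_a: False
          show False
          proof (cases "\<alpha> = c")
            case True
            have cz: "c \<in> S z" using al True by simp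
            have bn: "\<beta> \<noteq> a" "\<beta> \<noteq> c" "\<beta> \<noteq> b"
            proof -
              show "\<beta> \<noteq> a"
              proof
                assume "\<beta> = a" hence "a = \<alpha>" using Uzu[of a \<alpha>] be a al by simp
                thus False using al_a by simp
              qed
              show "\<beta> \<noteq> c"
              proof
                assume "\<beta> = c" hence "c = a" using Uuv[of c a] be c a by simp
                thus False using ca by simp
              qed
              show "\<beta> \<noteq> b"
              proof
                assume "\<beta> = b" hence "b = c" using Uzy[of b c] be b cz c by simp
                thus False using bc by simp
              qed
            qed
            have "(lf [u,y,z,v], lf [c,a,b,\<beta>]) \<in> emb n m T [{0,1},{0,2},{0,3},{1,2,3}] 4 S"
              by (rule emb_mem) (use uv y yuv z a b c be cz bn ba ca bc all_in trs ms
                   in \<open>auto simp: less_Suc_eq numeral_eq_Suc\<close>)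
            thus False using nb6 by auto
          next
            case al_c: False
            have alb: "\<alpha> \<noteq> b"
            proof
              assume "\<alpha> = b" hence "b = a" using Uuv[of b a] al b a by simp
              thus False using ba by simp
            qed
            show False
            proof (cases "\<beta> = b")
              case True
              have bz: "b \<in> S z" using be True by simp
              have "(lf [v,y,z,u], lf [b,a,c,\<alpha>]) \<in> emb n m T [{0,1},{0,2},{0,3},{1,2,3}] 4 S"
                by (rule emb_mem) (use uv y yuv z a b c bz al al_a al_c alb ba ca bc all_in trs ms
                     in \<open>auto simp: less_Suc_eq numeral_eq_Suc\<close>)
              thus False using nb6 by auto
            next
              case be_b: False
              have bea: "\<beta> \<noteq> a"
              proof
                assume "\<beta> = a" hence "a = \<alpha>" using Uzu[of a \<alpha>] be a al by simp
                thus False using al_a by simp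
              qed
              have bec: "\<beta> \<noteq> c"
              proof
                assume "\<beta> = c" hence "c = a" using Uuv[of c a] be c a by simp
                thus False using ca by simp
              qed
              have alb2: "\<alpha> \<noteq> \<beta>"
              proof
                assume "\<alpha> = \<beta>" hence "\<alpha> = a" using Uuv[of \<alpha> a] be al a by simp
                thus False using al_a by simp
              qed
              have gn: "\<gamma> \<noteq> a" "\<gamma> \<noteq> b" "\<gamma> \<noteq> c" "\<gamma> \<noteq> \<alpha>" "\<gamma> \<noteq> \<beta>"
              proof -
                show "\<gamma> \<noteq> a" using ga y by auto
                show "\<gamma> \<noteq> b"
                proof
                  assume "\<gamma> = b" hence "b = \<beta>" using Uzv[of b \<beta>] ga b be by simp
                  thus False using be_b by simp
                qed
                show "\<gamma> \<noteq> c"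
                proof
                  assume "\<gamma> = c" hence "c = \<alpha>" using Uzu[of c \<alpha>] ga c al by simp
                  thus False using al_c by simp
                qed
                show "\<gamma> \<noteq> \<alpha>"
                proof
                  assume "\<gamma> = \<alpha>" hence "\<alpha> = c" using Uuy[of \<alpha> c] ga c al by simp
                  thus False using al_c by simp
                qed
                show "\<gamma> \<noteq> \<beta>"
                proof
                  assume "\<gamma> = \<beta>" hence "\<beta> = b" using Uvy[of \<beta> b] ga b be by simp
                  thus False using be_b by simp
                qed
              qed
              have "(lf [u,v,y,z], lf [a,b,c,\<alpha>,\<beta>,\<gamma>]) \<in> emb n m T [{0,2,3},{0,1,4},{1,2,5},{3,4,5}] 6 S"
                by (rule emb_mem) (use uv y yuv z a b c be al ga al_a al_c alb be_b bea bec alb2 gn ba ca bc all_in trs ms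
                     in \<open>auto simp: less_Suc_eq numeral_eq_Suc\<close>)
              thus False using nb7 by auto
            qed
          qed
        qed
      qed
    qed
  qed
qed

lemma clique_bound2:
  assumes hS: "\<forall>v<n. S v \<subseteq> {..<m}" and htr: "\<forall>v<n. real (card (S v)) \<le> T"
    and nb: "noBad n m T S"
  shows "clique_number n S \<le> max 3 (mono_clique_number n m S)"
proof (rule clique_number_le)
  fix K assume K: "is_clique n S K"
  show "card K \<le> max 3 (mono_clique_number n m S)"
  proof (cases "card K \<ge> 4")
    case True
    then obtain a where a: "a < m" "K \<subseteq> {v\<in>{..<n}. a \<in> S v}"
      using clique_part2[OF hS htr nb K] by blast
    have "card K \<le> card {v\<in>{..<n}. a \<in> S v}" by (rule card_mono) (use a in auto)
    also have "\<dots> \<le> mono_clique_number n m S" by (rule mono_ge[OF a(1)])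
    finally show ?thesis by simp
  qed simp
qed




lemma exp_emb2:
  assumes P: "set_pmf P \<subseteq> {..m}" and m: "m > 0" and n: "n > 0" and T: "T \<ge> 0"
    and M: "EY2 n m P \<le> M"
    and Ns: "\<forall>i<length Ns. Ns ! i \<subseteq> {..<l} \<and> card (Ns ! i) \<ge> 2"
  shows "measure_pmf.expectation (RIG n m P) (\<lambda>S. real (card (emb n m T Ns l S)))
         \<le> real n ^ length Ns * real m ^ l * (\<Prod>i<length Ns. (T / real m) ^ (card (Ns ! i) - 2) * M / (real n * real m))"
proof -
  have "measure_pmf.expectation (RIG n m P) (\<lambda>S. real (card (emb n m T Ns l S)))
      \<le> real n ^ length Ns * real m ^ l * (\<Prod>i<length Ns. hT m P T (card (Ns ! i)))"
    by (rule exp_emb[OF P]) (use Ns in auto)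
  also have "\<dots> \<le> real n ^ length Ns * real m ^ l * (\<Prod>i<length Ns. (T / real m) ^ (card (Ns ! i) - 2) * M / (real n * real m))"
  proof (rule mult_left_mono[OF prod_mono])
    fix i assume i: "i \<in> {..<length Ns}"
    have d: "card (Ns ! i) \<ge> 2" using Ns i by auto
    have "hT m P T (card (Ns ! i)) \<le> (T / real m) ^ (card (Ns ! i) - 2) * EY2 n m P / (real n * real m)"
      by (rule hT_bound[OF P m n T d])
    also have "\<dots> \<le> (T / real m) ^ (card (Ns ! i) - 2) * M / (real n * real m)"
      using M T m n by (intro divide_right_mono mult_left_mono) auto
    finally show "0 \<le> hT m P T (card (Ns ! i)) \<and>
        hT m P T (card (Ns ! i)) \<le> (T / real m) ^ (card (Ns ! i) - 2) * M / (real n * real m)"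
      using hT_nonneg by auto
  qed simp
  finally show ?thesis .
qed

context
  fixes n m :: nat and P :: "nat pmf" and T M :: real
  assumes P: "set_pmf P \<subseteq> {..m}" and m: "m > 0" and n: "n > 0" and T: "T \<ge> 0"
    and M: "EY2 n m P \<le> M"
begin

lemma tp4: "measure_pmf.expectation (RIG n m P) (\<lambda>S. real (card (emb n m T [{0,1},{0,1}] 2 S))) \<le> M^2"
proof -
  let ?Ns = "[{0,1},{0,1}] :: nat set list"
  have side: "\<forall>i<length ?Ns. ?Ns ! i \<subseteq> {..<2} \<and> card (?Ns ! i) \<ge> 2"
    by (auto simp: less_Suc_eq numeral_eq_Suc card_insert_if)
  have pr: "(\<Prod>i<length ?Ns. (T / real m) ^ (card (?Ns ! i) - 2) * M / (real n * real m))
      = (M / (real n * real m)) ^ 2"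
    by (simp add: eval_nat_numeral lessThan_Suc card_insert_if field_simps)
  have "measure_pmf.expectation (RIG n m P) (\<lambda>S. real (card (emb n m T ?Ns 2 S)))
     \<le> real n ^ length ?Ns * real m ^ 2 * ((M / (real n * real m)) ^ 2)"
    using exp_emb2[OF P m n T M side] unfolding pr .
  also have "\<dots> = M^2" using m n by (simp add: field_simps eval_nat_numeral)
  finally show ?thesis .
qed

lemma tp6: "measure_pmf.expectation (RIG n m P) (\<lambda>S. real (card (emb n m T [{0,2},{0,1},{1,2}] 3 S))) \<le> M^3"
proof -
  let ?Ns = "[{0,2},{0,1},{1,2}] :: nat set list"
  have side: "\<forall>i<length ?Ns. ?Ns ! i \<subseteq> {..<3} \<and> card (?Ns ! i) \<ge> 2"
    by (auto simp: less_Suc_eq numeral_eq_Suc card_insert_if)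
  have pr: "(\<Prod>i<length ?Ns. (T / real m) ^ (card (?Ns ! i) - 2) * M / (real n * real m))
      = (M / (real n * real m)) ^ 3"
    by (simp add: eval_nat_numeral lessThan_Suc card_insert_if field_simps)
  have "measure_pmf.expectation (RIG n m P) (\<lambda>S. real (card (emb n m T ?Ns 3 S)))
     \<le> real n ^ length ?Ns * real m ^ 3 * ((M / (real n * real m)) ^ 3)"
    using exp_emb2[OF P m n T M side] unfolding pr .
  also have "\<dots> = M^3" using m n by (simp add: field_simps eval_nat_numeral)
  finally show ?thesis .
qed

lemma t1: "measure_pmf.expectation (RIG n m P) (\<lambda>S. real (card (emb n m T [{0,1,2},{0,1,2}] 3 S))) \<le> M^2 * real m * (T / real m)^2"
proof -
  let ?Ns = "[{0,1,2},{0,1,2}] :: nat set list"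
  have side: "\<forall>i<length ?Ns. ?Ns ! i \<subseteq> {..<3} \<and> card (?Ns ! i) \<ge> 2"
    by (auto simp: less_Suc_eq numeral_eq_Suc card_insert_if)
  have pr: "(\<Prod>i<length ?Ns. (T / real m) ^ (card (?Ns ! i) - 2) * M / (real n * real m))
      = ((T / real m) * M / (real n * real m)) ^ 2"
    by (simp add: eval_nat_numeral lessThan_Suc card_insert_if field_simps)
  have "measure_pmf.expectation (RIG n m P) (\<lambda>S. real (card (emb n m T ?Ns 3 S)))
     \<le> real n ^ length ?Ns * real m ^ 3 * (((T / real m) * M / (real n * real m)) ^ 2)"
    using exp_emb2[OF P m n T M side] unfolding pr .
  also have "\<dots> = M^2 * real m * (T / real m)^2" using m n by (simp add: field_simps eval_nat_numeral)
  finally show ?thesis .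
qed

lemma t2: "measure_pmf.expectation (RIG n m P) (\<lambda>S. real (card (emb n m T [{0,1},{0,1},{0,1}] 2 S))) \<le> M^3 / real m"
proof -
  let ?Ns = "[{0,1},{0,1},{0,1}] :: nat set list"
  have side: "\<forall>i<length ?Ns. ?Ns ! i \<subseteq> {..<2} \<and> card (?Ns ! i) \<ge> 2"
    by (auto simp: less_Suc_eq numeral_eq_Suc card_insert_if)
  have pr: "(\<Prod>i<length ?Ns. (T / real m) ^ (card (?Ns ! i) - 2) * M / (real n * real m))
      = (M / (real n * real m)) ^ 3"
    by (simp add: eval_nat_numeral lessThan_Suc card_insert_if field_simps)
  have "measure_pmf.expectation (RIG n m P) (\<lambda>S. real (card (emb n m T ?Ns 2 S)))
     \<le> real n ^ length ?Ns * real m ^ 2 * ((M / (real n * real m)) ^ 3)"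
    using exp_emb2[OF P m n T M side] unfolding pr .
  also have "\<dots> = M^3 / real m" using m n by (simp add: field_simps eval_nat_numeral)
  finally show ?thesis .
qed

lemma t4: "measure_pmf.expectation (RIG n m P) (\<lambda>S. real (card (emb n m T [{0,1},{0,1},{0,2},{1,2}] 3 S))) \<le> M^4 / real m"
proof -
  let ?Ns = "[{0,1},{0,1},{0,2},{1,2}] :: nat set list"
  have side: "\<forall>i<length ?Ns. ?Ns ! i \<subseteq> {..<3} \<and> card (?Ns ! i) \<ge> 2"
    by (auto simp: less_Suc_eq numeral_eq_Suc card_insert_if)
  have pr: "(\<Prod>i<length ?Ns. (T / real m) ^ (card (?Ns ! i) - 2) * M / (real n * real m))
      = (M / (real n * real m)) ^ 4"
    by (simp add: eval_nat_numeral lessThan_Suc card_insert_if field_simps)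
  have "measure_pmf.expectation (RIG n m P) (\<lambda>S. real (card (emb n m T ?Ns 3 S)))
     \<le> real n ^ length ?Ns * real m ^ 3 * ((M / (real n * real m)) ^ 4)"
    using exp_emb2[OF P m n T M side] unfolding pr .
  also have "\<dots> = M^4 / real m" using m n by (simp add: field_simps eval_nat_numeral)
  finally show ?thesis .
qed

lemma t5: "measure_pmf.expectation (RIG n m P) (\<lambda>S. real (card (emb n m T [{0,1,2},{0,1,3},{2,3}] 4 S))) \<le> M^3 * real m * (T / real m)^2"
proof -
  let ?Ns = "[{0,1,2},{0,1,3},{2,3}] :: nat set list"
  have side: "\<forall>i<length ?Ns. ?Ns ! i \<subseteq> {..<4} \<and> card (?Ns ! i) \<ge> 2"
    by (auto simp: less_Suc_eq numeral_eq_Suc card_insert_if)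
  have pr: "(\<Prod>i<length ?Ns. (T / real m) ^ (card (?Ns ! i) - 2) * M / (real n * real m))
      = ((T / real m) * M / (real n * real m)) ^ 2 * (M / (real n * real m))"
    by (simp add: eval_nat_numeral lessThan_Suc card_insert_if field_simps)
  have "measure_pmf.expectation (RIG n m P) (\<lambda>S. real (card (emb n m T ?Ns 4 S)))
     \<le> real n ^ length ?Ns * real m ^ 4 * (((T / real m) * M / (real n * real m)) ^ 2 * (M / (real n * real m)))"
    using exp_emb2[OF P m n T M side] unfolding pr .
  also have "\<dots> = M^3 * real m * (T / real m)^2" using m n by (simp add: field_simps eval_nat_numeral)
  finally show ?thesis .
qed

lemma t6: "measure_pmf.expectation (RIG n m P) (\<lambda>S. real (card (emb n m T [{0,1},{0,2},{0,3},{1,2,3}] 4 S))) \<le> M^4 * (T / real m)"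
proof -
  let ?Ns = "[{0,1},{0,2},{0,3},{1,2,3}] :: nat set list"
  have side: "\<forall>i<length ?Ns. ?Ns ! i \<subseteq> {..<4} \<and> card (?Ns ! i) \<ge> 2"
    by (auto simp: less_Suc_eq numeral_eq_Suc card_insert_if)
  have pr: "(\<Prod>i<length ?Ns. (T / real m) ^ (card (?Ns ! i) - 2) * M / (real n * real m))
      = (M / (real n * real m)) ^ 3 * ((T / real m) * M / (real n * real m))"
    by (simp add: eval_nat_numeral lessThan_Suc card_insert_if field_simps)
  have "measure_pmf.expectation (RIG n m P) (\<lambda>S. real (card (emb n m T ?Ns 4 S)))
     \<le> real n ^ length ?Ns * real m ^ 4 * ((M / (real n * real m)) ^ 3 * ((T / real m) * M / (real n * real m)))"
    using exp_emb2[OF P m n T M side] unfolding pr .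
  also have "\<dots> = M^4 * (T / real m)" using m n by (simp add: field_simps eval_nat_numeral)
  finally show ?thesis .
qed

lemma t7: "measure_pmf.expectation (RIG n m P) (\<lambda>S. real (card (emb n m T [{0,2,3},{0,1,4},{1,2,5},{3,4,5}] 6 S))) \<le> M^4 * (real m)^2 * (T / real m)^4"
proof -
  let ?Ns = "[{0,2,3},{0,1,4},{1,2,5},{3,4,5}] :: nat set list"
  have side: "\<forall>i<length ?Ns. ?Ns ! i \<subseteq> {..<6} \<and> card (?Ns ! i) \<ge> 2"
    by (auto simp: less_Suc_eq numeral_eq_Suc card_insert_if)
  have pr: "(\<Prod>i<length ?Ns. (T / real m) ^ (card (?Ns ! i) - 2) * M / (real n * real m))
      = ((T / real m) * M / (real n * real m)) ^ 4"
    by (simp add: eval_nat_numeral lessThan_Suc card_insert_if field_simps)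
  have "measure_pmf.expectation (RIG n m P) (\<lambda>S. real (card (emb n m T ?Ns 6 S)))
     \<le> real n ^ length ?Ns * real m ^ 6 * (((T / real m) * M / (real n * real m)) ^ 4)"
    using exp_emb2[OF P m n T M side] unfolding pr .
  also have "\<dots> = M^4 * (real m)^2 * (T / real m)^4" using m n by (simp add: field_simps eval_nat_numeral)
  finally show ?thesis .
qed

end




lemma supp_sub:
  assumes "set_pmf P \<subseteq> {..m}" "S \<in> set_pmf (RIG n m P)"
  shows "\<forall>v<n. S v \<subseteq> {..<m}"
  using set_RIG[OF assms(2)] set_attr[OF assms(1)] by blast

lemma prob_mono_supp:
  assumes "\<And>S. S \<in> set_pmf p \<Longrightarrow> S \<in> X \<Longrightarrow> S \<in> Y"
  shows "measure_pmf.prob p X \<le> measure_pmf.prob p Y"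
proof -
  have "measure_pmf.prob p X = measure_pmf.prob p (X \<inter> set_pmf p)" by (simp add: measure_Int_set_pmf)
  also have "\<dots> \<le> measure_pmf.prob p Y"
    by (rule measure_pmf.finite_measure_mono) (use assms in auto)
  finally show ?thesis .
qed

lemma markov:
  fixes f :: "(nat \<Rightarrow> nat set) \<Rightarrow> real"
  assumes P: "set_pmf P \<subseteq> {..m}" and f: "\<And>S. f S \<ge> 0" and c: "c > 0"
  shows "measure_pmf.prob (RIG n m P) {S. c \<le> f S} \<le> measure_pmf.expectation (RIG n m P) f / c"
  using integral_Markov_inequality_measure[of "RIG n m P" f "{}" c] finite_RIG[OF P] f c
  by (auto intro: integrable_measure_pmf_finite)

lemma part1_n:
  assumes P: "set_pmf P \<subseteq> {..m}" and m: "m > 0" and n: "n > 0" and M: "EY2 n m P \<le> M" and K: "K > 1"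
  shows "measure_pmf.prob (RIG n m P)
           {S. \<bar>real (clique_number n S) - real (mono_clique_number n m S)\<bar> > K} \<le> (M^2 + M^3) / (K - 1)"
proof -
  define c where "c = (\<lambda>S. real (card (emb n m (real m) [{0,1},{0,1}] 2 S)) + real (card (emb n m (real m) [{0,2},{0,1},{1,2}] 3 S)))"
  have "measure_pmf.prob (RIG n m P) {S. \<bar>real (clique_number n S) - real (mono_clique_number n m S)\<bar> > K}
      \<le> measure_pmf.prob (RIG n m P) {S. K - 1 \<le> c S}"
  proof (rule prob_mono_supp)
    fix S assume S: "S \<in> set_pmf (RIG n m P)" and X: "S \<in> {S. \<bar>real (clique_number n S) - real (mono_clique_number n m S)\<bar> > K}"
    have hS: "\<forall>v<n. S v \<subseteq> {..<m}" by (rule supp_sub[OF P S])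
    have le1: "mono_clique_number n m S \<le> clique_number n S" by (rule mono_le_clique)
    have le2: "clique_number n S \<le> card (Rset n m S) + max 1 (mono_clique_number n m S)"
      by (rule clique_number_le) (rule clique_part1[OF hS])
    have "real (card (Rset n m S)) \<le> c S" unfolding c_def using Rset_card[of n m S]
      by (metis of_nat_add of_nat_le_iff)
    hence "real (clique_number n S) - real (mono_clique_number n m S) \<le> 1 + c S"
      using le2 by (simp add: max_def split: if_splits; linarith)
    moreover have "real (clique_number n S) - real (mono_clique_number n m S) \<ge> 0" using le1 by simp
    ultimately show "S \<in> {S. K - 1 \<le> c S}" using X by auto
  qed
  also have "\<dots> \<le> measure_pmf.expectation (RIG n m P) c / (K - 1)"
    by (rule markov[OF P]) (use K in \<open>auto simp: c_def\<close>)
  also have "\<dots> \<le> (M^2 + M^3) / (K - 1)"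
  proof (rule divide_right_mono)
    have "measure_pmf.expectation (RIG n m P) c
        = measure_pmf.expectation (RIG n m P) (\<lambda>S. real (card (emb n m (real m) [{0,1},{0,1}] 2 S)))
        + measure_pmf.expectation (RIG n m P) (\<lambda>S. real (card (emb n m (real m) [{0,2},{0,1},{1,2}] 3 S)))"
      unfolding c_def by (rule Bochner_Integration.integral_add) (use finite_RIG[OF P] in \<open>auto intro: integrable_measure_pmf_finite\<close>)
    also have "\<dots> \<le> M^2 + M^3"
      using tp4[OF P m n _ M, of "real m"] tp6[OF P m n _ M, of "real m"] by simp
    finally show "measure_pmf.expectation (RIG n m P) c \<le> M^2 + M^3" .
  qed (use K in simp)
  finally show ?thesis .
qed


lemma emb_ne_card: "emb n m T Ns l S \<noteq> {} \<Longrightarrow> 1 \<le> real (card (emb n m T Ns l S))"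
  using emb_finite[of n m T Ns l S] by (simp add: Suc_le_eq card_gt_0_iff)

lemma prob_emb_le:
  assumes P: "set_pmf P \<subseteq> {..m}"
  shows "measure_pmf.prob (RIG n m P) {S. emb n m T Ns l S \<noteq> {}}
         \<le> measure_pmf.expectation (RIG n m P) (\<lambda>S. real (card (emb n m T Ns l S)))"
proof -
  have "measure_pmf.prob (RIG n m P) {S. emb n m T Ns l S \<noteq> {}}
      \<le> measure_pmf.prob (RIG n m P) {S. 1 \<le> real (card (emb n m T Ns l S))}"
    by (rule prob_mono_supp) (blast intro: emb_ne_card)
  also have "\<dots> \<le> measure_pmf.expectation (RIG n m P) (\<lambda>S. real (card (emb n m T Ns l S))) / 1"
    by (rule markov[OF P]) auto
  finally show ?thesis by simp
qed

lemma part2_n: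
  assumes P: "set_pmf P \<subseteq> {..m}" and m: "m > 0" and n: "n > 0" and M: "EY2 n m P \<le> M" and T: "T \<ge> 0"
  shows "measure_pmf.prob (RIG n m P)
           {S. \<not> real (clique_number n S) \<le> max 3 (real (mono_clique_number n m S) + 3)}
         \<le> real n * measure_pmf.prob P {k. real k > T}
           + (M^2 * real m * (T / real m)^2 + M^3 / real m + M^4 / real m + M^3 * real m * (T / real m)^2
              + M^4 * (T / real m) + M^4 * (real m)^2 * (T / real m)^4)"
proof -
  let ?p = "measure_pmf.prob (RIG n m P)"
  let ?E = "\<lambda>Ns l. {S. emb n m T Ns l S \<noteq> {}}"
  let ?F = "{S. \<exists>v<n. real (card (S v)) > T}"
  have "?p {S. \<not> real (clique_number n S) \<le> max 3 (real (mono_clique_number n m S) + 3)}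
      \<le> ?p (?F \<union> (?E [{0,1,2},{0,1,2}] 3 \<union> (?E [{0,1},{0,1},{0,1}] 2 \<union> (?E [{0,1},{0,1},{0,2},{1,2}] 3
          \<union> (?E [{0,1,2},{0,1,3},{2,3}] 4 \<union> (?E [{0,1},{0,2},{0,3},{1,2,3}] 4 \<union> ?E [{0,2,3},{0,1,4},{1,2,5},{3,4,5}] 6))))))"
  proof (rule prob_mono_supp)
    fix S assume S: "S \<in> set_pmf (RIG n m P)"
      and X: "S \<in> {S. \<not> real (clique_number n S) \<le> max 3 (real (mono_clique_number n m S) + 3)}"
    have hS: "\<forall>v<n. S v \<subseteq> {..<m}" by (rule supp_sub[OF P S])
    show "S \<in> ?F \<union> (?E [{0,1,2},{0,1,2}] 3 \<union> (?E [{0,1},{0,1},{0,1}] 2 \<union> (?E [{0,1},{0,1},{0,2},{1,2}] 3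
          \<union> (?E [{0,1,2},{0,1,3},{2,3}] 4 \<union> (?E [{0,1},{0,2},{0,3},{1,2,3}] 4 \<union> ?E [{0,2,3},{0,1,4},{1,2,5},{3,4,5}] 6)))))"
    proof (rule ccontr)
      assume nt: "\<not> ?thesis"
      have htr: "\<forall>v<n. real (card (S v)) \<le> T"
      proof (intro allI impI)
        fix v assume v: "v < n"
        from nt have "S \<notin> ?F" by blast
        hence "\<not> (T < real (card (S v)))" using v by blast
        thus "real (card (S v)) \<le> T" by simp
      qed
      have nb: "noBad n m T S" using nt unfolding noBad_def by auto
      have "clique_number n S \<le> max 3 (mono_clique_number n m S)"
        by (rule clique_bound2[OF hS htr nb])
      hence "real (clique_number n S) \<le> max 3 (real (mono_clique_number n m S) + 3)"
        by (simp add: max_def split: if_splits)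
      thus False using X by simp
    qed
  qed
  also have "\<dots> \<le> ?p ?F + (?p (?E [{0,1,2},{0,1,2}] 3) + (?p (?E [{0,1},{0,1},{0,1}] 2) + (?p (?E [{0,1},{0,1},{0,2},{1,2}] 3)
          + (?p (?E [{0,1,2},{0,1,3},{2,3}] 4) + (?p (?E [{0,1},{0,2},{0,3},{1,2,3}] 4) + ?p (?E [{0,2,3},{0,1,4},{1,2,5},{3,4,5}] 6))))))"
    by (intro order.trans[OF measure_Un_le] add_left_mono) auto
  also have "\<dots> \<le> real n * measure_pmf.prob P {k. real k > T}
           + (M^2 * real m * (T / real m)^2 + (M^3 / real m + (M^4 / real m + (M^3 * real m * (T / real m)^2
              + (M^4 * (T / real m) + M^4 * (real m)^2 * (T / real m)^4)))))"
    by (intro add_mono order.trans[OF prob_emb_le[OF P]] prob_trunc[OF P]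
        t1[OF P m n T M] t2[OF P m n T M] t4[OF P m n T M] t5[OF P m n T M] t6[OF P m n T M] t7[OF P m n T M])
  finally show ?thesis by (simp add: algebra_simps)
qed




lemma ev_basic:
  assumes "RIG_seq m P" "condA m P" "var_bounded m P"
  shows "\<exists>M\<ge>0. \<forall>\<^sub>F n in sequentially. set_pmf (P n) \<subseteq> {..m n} \<and> m n > 0 \<and> n > 0 \<and> EY2 n (m n) (P n) \<le> M"
proof -
  have Psub: "\<And>n. set_pmf (P n) \<subseteq> {..m n}" and mlim: "filterlim m at_top sequentially"
    using assms(1) unfolding RIG_seq_def by auto
  obtain B1 where B1: "\<forall>\<^sub>F n in sequentially. \<bar>measure_pmf.expectation (P n) (Yval n (m n))\<bar> \<le> B1"
    using assms(2) unfolding condA_def by auto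
  obtain B2 where B2: "\<forall>\<^sub>F n in sequentially. \<bar>measure_pmf.variance (P n) (Yval n (m n))\<bar> \<le> B2"
    using assms(3) unfolding var_bounded_def by auto
  define B where "B = max B1 B2"
  define M where "M = max 0 (B + B\<^sup>2)"
  have m1: "\<forall>\<^sub>F n in sequentially. m n \<ge> 1"
    using mlim by (simp add: filterlim_at_top)
  have n1: "\<forall>\<^sub>F n in sequentially. n > (0::nat)" by (rule eventually_gt_at_top)
  have "\<forall>\<^sub>F n in sequentially. set_pmf (P n) \<subseteq> {..m n} \<and> m n > 0 \<and> n > 0 \<and> EY2 n (m n) (P n) \<le> M"
    using B1 B2 m1 n1
  proof eventually_elim
    case (elim n)
    have "EY2 n (m n) (P n) \<le> B + B\<^sup>2"
      by (rule EY2_bound[OF Psub]) (use elim in \<open>auto simp: B_def\<close>)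
    thus ?case using elim Psub[of n] by (auto simp: M_def)
  qed
  thus ?thesis by (intro exI[of _ M]) (auto simp: M_def)
qed

lemma part1:
  assumes "RIG_seq m P" "condA m P" "var_bounded m P" and e: "e > 0"
  shows "\<exists>K::real. \<forall>\<^sub>F n in sequentially.
               measure_pmf.prob (RIG n (m n) (P n))
                 {S. \<bar>real (clique_number n S) - real (mono_clique_number n (m n) S)\<bar> > K} < e"
proof -
  obtain M where M0: "M \<ge> 0" and ev: "\<forall>\<^sub>F n in sequentially. set_pmf (P n) \<subseteq> {..m n} \<and> m n > 0 \<and> n > 0 \<and> EY2 n (m n) (P n) \<le> M"
    using ev_basic[OF assms(1-3)] by blast
  define Q where "Q = M^2 + M^3"
  have Q0: "Q \<ge> 0" using M0 by (simp add: Q_def)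
  define K where "K = 2 + Q / e"
  have "Q / e \<ge> 0" using Q0 e by simp
  hence K1: "K > 1" by (simp add: K_def)
  have lt: "Q / (K - 1) < e"
  proof -
    have Kq: "K - 1 = (e + Q) / e" using e by (simp add: K_def field_simps)
    have "Q / (K - 1) = Q * e / (e + Q)" unfolding Kq using e Q0 by (simp add: field_simps)
    also have "\<dots> < e" using e Q0 by (simp add: field_simps)
    finally show ?thesis .
  qed
  have "\<forall>\<^sub>F n in sequentially. measure_pmf.prob (RIG n (m n) (P n))
                 {S. \<bar>real (clique_number n S) - real (mono_clique_number n (m n) S)\<bar> > K} < e"
    using ev
  proof eventually_elim
    case (elim n)
    hence "measure_pmf.prob (RIG n (m n) (P n))
                 {S. \<bar>real (clique_number n S) - real (mono_clique_number n (m n) S)\<bar> > K} \<le> Q / (K - 1)"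
      unfolding Q_def by (intro part1_n K1) auto
    thus ?case using lt by linarith
  qed
  thus ?thesis by blast
qed


lemma rho_facts:
  fixes m :: nat and e :: real
  assumes m: "m > 0" and e: "e \<ge> 0"
  shows "real m * (e * sqrt (real m) / real m)^2 = e^2"
    and "(real m)^2 * (e * sqrt (real m) / real m)^4 = e^4"
    and "e * sqrt (real m) / real m \<le> e"
proof -
  have sq: "(sqrt (real m))^2 = real m" by simp
  have sq4: "(sqrt (real m))^4 = (real m)^2" using sq by (metis power_mult numeral_Bit0 mult_2 power2_eq_square numeral_One mult.commute)
  show "real m * (e * sqrt (real m) / real m)^2 = e^2"
    using m by (simp add: power_mult_distrib power_divide sq field_simps power2_eq_square)
  show "(real m)^2 * (e * sqrt (real m) / real m)^4 = e^4"
    using m by (simp add: power_mult_distrib power_divide sq4 field_simps)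
  have "sqrt (real m) \<le> real m"
  proof -
    have "1 \<le> real m" using m by simp
    hence "sqrt (real m) * 1 \<le> sqrt (real m) * sqrt (real m)" by (intro mult_left_mono) auto
    thus ?thesis by simp
  qed
  hence "e * sqrt (real m) \<le> e * real m" using e by (intro mult_left_mono) auto
  thus "e * sqrt (real m) / real m \<le> e" using m by (simp add: divide_le_eq)
qed

lemma Yval_set:
  assumes m: "m > 0" and n: "n > 0"
  shows "{k. real k > e * sqrt (real m)} = {k. Yval n m k > e * sqrt (real n)}"
proof -
  have "Yval n m k > e * sqrt (real n) \<longleftrightarrow> real k > e * sqrt (real m)" for k
  proof -
    have sn: "sqrt (real n) > 0" and sm: "sqrt (real m) > 0" using m n by auto
    have Yeq: "Yval n m k = sqrt (real n) * (real k / sqrt (real m))"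
      unfolding Yval_def by (simp add: real_sqrt_divide)
    have "Yval n m k > e * sqrt (real n) \<longleftrightarrow> sqrt (real n) * e < sqrt (real n) * (real k / sqrt (real m))"
      unfolding Yeq by (simp only: mult.commute[of e])
    also have "\<dots> \<longleftrightarrow> real k / sqrt (real m) > e"
      by (rule mult_less_cancel_left_pos[OF sn])
    also have "\<dots> \<longleftrightarrow> real k > e * sqrt (real m)" using sm by (simp add: pos_less_divide_eq)
    finally show ?thesis .
  qed
  thus ?thesis by auto
qed

lemma part2:
  assumes "RIG_seq m P" "condA m P" "var_bounded m P"
    and epos: "\<forall>n. eps n > 0" and e0: "eps \<longlonglongrightarrow> 0"
    and lim: "(\<lambda>n. real n * measure_pmf.prob (P n) {k. Yval n (m n) k > eps n * sqrt (real n)}) \<longlonglongrightarrow> 0"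
  shows "(\<lambda>n. measure_pmf.prob (RIG n (m n) (P n))
                   {S. real (clique_number n S) \<le> max 3 (real (mono_clique_number n (m n) S) + 3)}) \<longlonglongrightarrow> 1"
proof -
  obtain M where M0: "M \<ge> 0" and ev: "\<forall>\<^sub>F n in sequentially. set_pmf (P n) \<subseteq> {..m n} \<and> m n > 0 \<and> n > 0 \<and> EY2 n (m n) (P n) \<le> M"
    using ev_basic[OF assms(1-3)] by blast
  have mlim: "filterlim m at_top sequentially" using assms(1) unfolding RIG_seq_def by auto
  have mi: "(\<lambda>n. inverse (real (m n))) \<longlonglongrightarrow> 0"
    by (rule tendsto_inverse_0_at_top[OF filterlim_compose[OF filterlim_real_sequentially mlim]])
  define g where "g = (\<lambda>n. real n * measure_pmf.prob (P n) {k. Yval n (m n) k > eps n * sqrt (real n)}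
      + (M^2 * (eps n)^2 + M^3 * inverse (real (m n)) + M^4 * inverse (real (m n)) + M^3 * (eps n)^2
         + M^4 * eps n + M^4 * (eps n)^4))"
  have g0: "g \<longlonglongrightarrow> 0"
  proof -
    have "g \<longlonglongrightarrow> 0 + (M^2 * 0^2 + M^3 * 0 + M^4 * 0 + M^3 * 0^2 + M^4 * 0 + M^4 * 0^4)"
      unfolding g_def by (intro tendsto_intros lim mi e0)
    thus ?thesis by simp
  qed
  let ?G = "\<lambda>n. {S. real (clique_number n S) \<le> max 3 (real (mono_clique_number n (m n) S) + 3)}"
  have lower: "\<forall>\<^sub>F n in sequentially. 1 - g n \<le> measure_pmf.prob (RIG n (m n) (P n)) (?G n)"
    using ev
  proof eventually_elim
    case (elim n)
    hence P: "set_pmf (P n) \<subseteq> {..m n}" and m: "m n > 0" and n: "n > 0" and M: "EY2 n (m n) (P n) \<le> M"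
      by auto
    define T where "T = eps n * sqrt (real (m n))"
    have T0: "T \<ge> 0" using epos[rule_format, of n] by (simp add: T_def)
    have e0n: "eps n \<ge> 0" using epos[rule_format, of n] by simp
    note rf = rho_facts[OF m e0n]
    have bad: "measure_pmf.prob (RIG n (m n) (P n)) {S. \<not> real (clique_number n S) \<le> max 3 (real (mono_clique_number n (m n) S) + 3)}
         \<le> real n * measure_pmf.prob (P n) {k. real k > T}
           + (M^2 * real (m n) * (T / real (m n))^2 + M^3 / real (m n) + M^4 / real (m n) + M^3 * real (m n) * (T / real (m n))^2
              + M^4 * (T / real (m n)) + M^4 * (real (m n))^2 * (T / real (m n))^4)"
      by (rule part2_n[OF P m n M T0])
    also have "\<dots> \<le> g n"
    proof -
      have s: "{k. real k > T} = {k. Yval n (m n) k > eps n * sqrt (real n)}"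
        unfolding T_def by (rule Yval_set[OF m n])
      have a1: "M^2 * real (m n) * (T / real (m n))^2 = M^2 * (eps n)^2" using rf(1) unfolding T_def by simp
      have a2: "M^3 * real (m n) * (T / real (m n))^2 = M^3 * (eps n)^2" using rf(1) unfolding T_def by simp
      have a3: "M^4 * (real (m n))^2 * (T / real (m n))^4 = M^4 * (eps n)^4" using rf(2) unfolding T_def by simp
      have a4: "M^4 * (T / real (m n)) \<le> M^4 * eps n" using rf(3) M0 unfolding T_def by (intro mult_left_mono) auto
      show ?thesis unfolding g_def s a1 a2 a3 using a4 by (simp add: divide_inverse)
    qed
    finally have b: "measure_pmf.prob (RIG n (m n) (P n)) {S. \<not> real (clique_number n S) \<le> max 3 (real (mono_clique_number n (m n) S) + 3)} \<le> g n" .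
    have "{S. \<not> real (clique_number n S) \<le> max 3 (real (mono_clique_number n (m n) S) + 3)} = UNIV - ?G n" by auto
    hence "measure_pmf.prob (RIG n (m n) (P n)) {S. \<not> real (clique_number n S) \<le> max 3 (real (mono_clique_number n (m n) S) + 3)}
        = 1 - measure_pmf.prob (RIG n (m n) (P n)) (?G n)"
      using measure_pmf.prob_compl[of "?G n" "RIG n (m n) (P n)"] by simp
    thus ?case using b by linarith
  qed
  have upper: "\<forall>\<^sub>F n in sequentially. measure_pmf.prob (RIG n (m n) (P n)) (?G n) \<le> 1"
    by (simp add: measure_pmf.prob_le_1)
  have low1: "(\<lambda>n. 1 - g n) \<longlonglongrightarrow> 1"
    using tendsto_diff[OF tendsto_const g0, of 1] by simp
  show ?thesis by (rule tendsto_sandwich[OF lower upper low1 tendsto_const])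
qed


theorem theorem2:
  shows "(\<forall>m P. RIG_seq m P \<and> condA m P \<and> var_bounded m P \<longrightarrow>
            (\<forall>e>0. \<exists>K::real. \<forall>\<^sub>F n in sequentially.
               measure_pmf.prob (RIG n (m n) (P n))
                 {S. \<bar>real (clique_number n S) - real (mono_clique_number n (m n) S)\<bar> > K} < e))
       \<and> (\<exists>C::real. \<forall>m P. RIG_seq m P \<and> condA m P \<and> var_bounded m P \<and>
            (\<exists>eps :: nat \<Rightarrow> real. (\<forall>n. eps n > 0) \<and> eps \<longlonglongrightarrow> 0 \<and>
               (\<lambda>n. real n * measure_pmf.prob (P n) {k. Yval n (m n) k > eps n * sqrt (real n)})
                 \<longlonglongrightarrow> 0)
            \<longrightarrow> (\<lambda>n. measure_pmf.prob (RIG n (m n) (P n))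
                   {S. real (clique_number n S) \<le> max C (real (mono_clique_number n (m n) S) + 3)})
                 \<longlonglongrightarrow> 1)"
proof (rule conjI)
  show "\<forall>m P. RIG_seq m P \<and> condA m P \<and> var_bounded m P \<longrightarrow>
            (\<forall>e>0. \<exists>K::real. \<forall>\<^sub>F n in sequentially.
               measure_pmf.prob (RIG n (m n) (P n))
                 {S. \<bar>real (clique_number n S) - real (mono_clique_number n (m n) S)\<bar> > K} < e)"
    using part1 by blast
  show "\<exists>C::real. \<forall>m P. RIG_seq m P \<and> condA m P \<and> var_bounded m P \<and>
            (\<exists>eps :: nat \<Rightarrow> real. (\<forall>n. eps n > 0) \<and> eps \<longlonglongrightarrow> 0 \<and>
               (\<lambda>n. real n * measure_pmf.prob (P n) {k. Yval n (m n) k > eps n * sqrt (real n)})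
                 \<longlonglongrightarrow> 0)
            \<longrightarrow> (\<lambda>n. measure_pmf.prob (RIG n (m n) (P n))
                   {S. real (clique_number n S) \<le> max C (real (mono_clique_number n (m n) S) + 3)})
                 \<longlonglongrightarrow> 1"
  proof (intro exI[of _ 3] allI impI)
    fix m P
    assume h: "RIG_seq m P \<and> condA m P \<and> var_bounded m P \<and>
            (\<exists>eps :: nat \<Rightarrow> real. (\<forall>n. eps n > 0) \<and> eps \<longlonglongrightarrow> 0 \<and>
               (\<lambda>n. real n * measure_pmf.prob (P n) {k. Yval n (m n) k > eps n * sqrt (real n)})
                 \<longlonglongrightarrow> 0)"
    then obtain eps :: "nat \<Rightarrow> real" where e: "\<forall>n. eps n > 0" "eps \<longlonglongrightarrow> 0"
      "(\<lambda>n. real n * measure_pmf.prob (P n) {k. Yval n (m n) k > eps n * sqrt (real n)}) \<longlonglongrightarrow> 0"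
      by blast
    show "(\<lambda>n. measure_pmf.prob (RIG n (m n) (P n))
                   {S. real (clique_number n S) \<le> max 3 (real (mono_clique_number n (m n) S) + 3)})
                 \<longlonglongrightarrow> 1"
      using part2[of m P eps] h e by blast
  qed
qed

end
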